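(* Let $\mathbf{F}$ be a field of characteristic $2$, $m\ge1$, and $A,B\in\{0,1\}^m$ with $|A|,|B|\ge2$. The following elements of $Q$ lie in $\ker(\pi)$. (a) If $A\cap B=\emptyset$, let $j\in B$ and $B'=B-\Delta_j$. Then $$\mathrm{Tr}(A)\mathrm{Tr}(B)+\mathrm{Tr}(A+\Delta_j)\mathrm{Tr}(B')+x_j\mathrm{Tr}(A+B')+x_j\mathrm{Tr}(A)\mathrm{Tr}(B')\in\ker(\pi).$$ (b) If $|A\cap B|\ge1$ and $B\le A$, let $i\in A\cap B$, $B'=B-\Delta_i$, $A'=A-\Delta_i$, and $J=A\setminus B$. Then $$\mathrm{Tr}(A)\mathrm{Tr}(B)+x_i\mathrm{Tr}(A)\mathrm{Tr}(B')+N_i\mathrm{Tr}(A')\mathrm{Tr}(B')+x_iN^{B'}\mathrm{Tr}(J+\Delta_i)\in\ker(\pi).$$ (c) If $|A\cap B|\ge1$, $A\not\le B$ and $B\not\le A$, put $I=A\cap B$, $J=A\setminus B$, $K=B\setminus A$. Then $$\mathrm{Tr}(A)\mathrm{Tr}(B)+\mathrm{Tr}(I+J+K)\mathrm{Tr}(I)+N^I\mathrm{Tr}(J)\mathrm{Tr}(K)\in\ker(\pi).$$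
   Context: Let $S=\mathbf{F}[x_1,y_1,\dots,x_m,y_m]$ with the $\mathbf{F}$-algebra automorphism $\sigma(x_i)=x_i$, $\sigma(y_i)=y_i+x_i$ of order 2, and let $S^{C_2}$ be the ring of $\sigma$-invariants. For $A=(a_1,\dots,a_m)\in\mathbb{N}^m$ write $x^A=\prod_s x_s^{a_s}$, $y^A=\prod_s y_s^{a_s}$, $N^A=\prod_s N_s^{a_s}$ where $N_s=y_s^2+x_sy_s$, $|A|=\sum_s a_s$. $A\le B$ means componentwise $\le$; sums/differences of sequences are componentwise. Elements of $\{0,1\}^m$ are identified with subsets of $\{1,\dots,m\}$; $\cap,\setminus$ are set operations and $i\in A$ means $a_i=1$. $\Delta_s$ has $1$ in position $s$ and $0$ elsewhere. For $A\in\{0,1\}^m$, $\mathrm{tr}(A)=y^A+\prod_s(y_s+x_s)^{a_s}$. Let $R=\mathbf{F}[x_1,\dots,x_m,N_1,\dots,N_m]$ (polynomial ring in $2m$ indeterminates), $Q=R[\mathrm{Tr}(A):A\in\{0,1\}^m,|A|\ge2]$ (polynomial ring), and $\pi:Q\to S^{C_2}$ the $\mathbf{F}$-algebra homomorphism with $\pi(x_i)=x_i$, $\pi(N_i)=y_i^2+x_iy_i$, $\pi(\mathrm{Tr}(A))=\mathrm{tr}(A)$. Convention: for $C$ with $|C|\le1$, $\mathrm{Tr}(0)=0$ and $\mathrm{Tr}(\Delta_s)=x_s$ in $Q$. *)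

theory Defs
  imports "HOL-Library.Poly_Mapping"
begin

(* The polynomial ring S = F[x_1,y_1,...,x_m,y_m] is modelled as the ring
  (nat =>0 nat) =>0 'a of polynomials over 'a in the variables indexed by nat;
  x_i is variable 2i and y_i is variable 2i+1.*)

definition Xv :: "nat \<Rightarrow> ((nat \<Rightarrow>\<^sub>0 nat) \<Rightarrow>\<^sub>0 'a::comm_ring_1)" where
  "Xv i = Poly_Mapping.single (Poly_Mapping.single (2*i) 1) 1"

definition Yv :: "nat \<Rightarrow> ((nat \<Rightarrow>\<^sub>0 nat) \<Rightarrow>\<^sub>0 'a::comm_ring_1)" where
  "Yv i = Poly_Mapping.single (Poly_Mapping.single (2*i+1) 1) 1"

(* N_i = y_i^2 + x_i y_i (the image of the generator N_i under pi).*)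
definition Nv :: "nat \<Rightarrow> ((nat \<Rightarrow>\<^sub>0 nat) \<Rightarrow>\<^sub>0 'a::comm_ring_1)" where
  "Nv i = Yv i ^ 2 + Xv i * Yv i"

(* N^C for a 0/1 sequence C (identified with a subset of {1..m}).*)
definition NPow :: "nat set \<Rightarrow> ((nat \<Rightarrow>\<^sub>0 nat) \<Rightarrow>\<^sub>0 'a::comm_ring_1)" where
  "NPow C = (\<Prod>s\<in>C. Nv s)"

(* tr(C) = y^C + prod_s (y_s+x_s)^{c_s}, the image of Tr(C) under pi.  For |C| <= 1 this
  gives tr(0) = 0 (char 2) and tr(Delta_s) = x_s, matching the convention for Tr in Q.*)
definition tr :: "nat set \<Rightarrow> ((nat \<Rightarrow>\<^sub>0 nat) \<Rightarrow>\<^sub>0 'a::comm_ring_1)" where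
  "tr C = (\<Prod>s\<in>C. Yv s) + (\<Prod>s\<in>C. Yv s + Xv s)"

end

theory Submission
  imports Defs
begin

lemma char2_lift:
  assumes "(1::'a::field) + 1 = 0"
  shows "(1::(nat \<Rightarrow>\<^sub>0 nat) \<Rightarrow>\<^sub>0 'a) + 1 = 0"
proof -
  have "(1::(nat \<Rightarrow>\<^sub>0 nat) \<Rightarrow>\<^sub>0 'a) + 1 = Poly_Mapping.single 0 ((1::'a) + 1)"
    by (simp only: single_add single_one)
  also have "\<dots> = 0" using assms by simp
  finally show ?thesis .
qed

lemma two_zero:
  fixes e :: "'b::comm_ring_1"
  assumes "(1::'b) + 1 = 0" "e = (1+1) * f"
  shows "e = 0"
  using assms by simp

definition PP :: "nat set \<Rightarrow> ((nat \<Rightarrow>\<^sub>0 nat) \<Rightarrow>\<^sub>0 'a::comm_ring_1)" where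
  "PP C = (\<Prod>s\<in>C. Yv s)"
definition QQ :: "nat set \<Rightarrow> ((nat \<Rightarrow>\<^sub>0 nat) \<Rightarrow>\<^sub>0 'a::comm_ring_1)" where
  "QQ C = (\<Prod>s\<in>C. Yv s + Xv s)"

lemma tr_PQ: "tr C = PP C + QQ C" by (simp add: tr_def PP_def QQ_def)

lemma PP_un: "finite C \<Longrightarrow> finite D \<Longrightarrow> C \<inter> D = {} \<Longrightarrow> PP (C \<union> D) = PP C * PP D"
  by (simp add: PP_def prod.union_disjoint)
lemma QQ_un: "finite C \<Longrightarrow> finite D \<Longrightarrow> C \<inter> D = {} \<Longrightarrow> QQ (C \<union> D) = QQ C * QQ D"
  by (simp add: QQ_def prod.union_disjoint)
lemma PP_ins: "finite C \<Longrightarrow> j \<notin> C \<Longrightarrow> PP (insert j C) = Yv j * PP C"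
  by (simp add: PP_def)
lemma QQ_ins: "finite C \<Longrightarrow> j \<notin> C \<Longrightarrow> QQ (insert j C) = (Yv j + Xv j) * QQ C"
  by (simp add: QQ_def)
lemma Nv_eq: "Nv i = Yv i * (Yv i + Xv i)"
  by (simp add: Nv_def power2_eq_square algebra_simps)
lemma NPow_eq: "NPow C = PP C * QQ C"
  by (simp add: NPow_def PP_def QQ_def Nv_eq prod.distrib)

theorem mainTheorem5:
  fixes m :: nat and A B :: "nat set"
  assumes char2: "(1::'a::field) + 1 = 0"
    and m: "m \<ge> 1"
    and AB: "A \<subseteq> {1..m}" "B \<subseteq> {1..m}"
    and cA: "card A \<ge> 2" and cB: "card B \<ge> 2"
  shows
    "(A \<inter> B = {} \<longrightarrow> (\<forall>j\<in>B.
        (tr A * tr B + tr (A \<union> {j}) * tr (B - {j}) + Xv j * tr (A \<union> (B - {j}))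
          + Xv j * tr A * tr (B - {j}) :: (nat \<Rightarrow>\<^sub>0 nat) \<Rightarrow>\<^sub>0 'a) = 0))
   \<and> (A \<inter> B \<noteq> {} \<and> B \<subseteq> A \<longrightarrow> (\<forall>i\<in>A \<inter> B.
        (tr A * tr B + Xv i * tr A * tr (B - {i}) + Nv i * tr (A - {i}) * tr (B - {i})
          + Xv i * NPow (B - {i}) * tr ((A - B) \<union> {i}) :: (nat \<Rightarrow>\<^sub>0 nat) \<Rightarrow>\<^sub>0 'a) = 0))
   \<and> (A \<inter> B \<noteq> {} \<and> \<not> A \<subseteq> B \<and> \<not> B \<subseteq> A \<longrightarrow>
        (tr A * tr B + tr ((A \<inter> B) \<union> (A - B) \<union> (B - A)) * tr (A \<inter> B)
          + NPow (A \<inter> B) * tr (A - B) * tr (B - A) :: (nat \<Rightarrow>\<^sub>0 nat) \<Rightarrow>\<^sub>0 'a) = 0)"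
proof -
  have c2: "(1::(nat \<Rightarrow>\<^sub>0 nat) \<Rightarrow>\<^sub>0 'a) + 1 = 0" using char2_lift[OF char2] .
  have fA: "finite A" and fB: "finite B" using AB finite_subset by blast+
  have pa: "(tr A * tr B + tr (A \<union> {j}) * tr (B - {j}) + Xv j * tr (A \<union> (B - {j}))
          + Xv j * tr A * tr (B - {j}) :: (nat \<Rightarrow>\<^sub>0 nat) \<Rightarrow>\<^sub>0 'a) = 0"
    if d: "A \<inter> B = {}" and j: "j \<in> B" for j
  proof -
    define B' where "B' = B - {j}"
    have fB': "finite B'" using fB B'_def by simp
    have Beq: "B = insert j B'" "j \<notin> B'" using j B'_def by auto
    have jA: "j \<notin> A" using d j by auto
    have dd: "A \<inter> B' = {}" using d B'_def by auto
    have e1: "A \<union> {j} = insert j A" by auto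
    let ?y = "Yv j :: (nat \<Rightarrow>\<^sub>0 nat) \<Rightarrow>\<^sub>0 'a" and ?x = "Xv j :: (nat \<Rightarrow>\<^sub>0 nat) \<Rightarrow>\<^sub>0 'a"
    have "(tr A * tr B + tr (A \<union> {j}) * tr (B - {j}) + Xv j * tr (A \<union> (B - {j}))
          + Xv j * tr A * tr (B - {j}) :: (nat \<Rightarrow>\<^sub>0 nat) \<Rightarrow>\<^sub>0 'a) =
       (PP A + QQ A) * (?y * PP B' + (?y + ?x) * QQ B') + (?y * PP A + (?y + ?x) * QQ A) * (PP B' + QQ B')
       + ?x * (PP A * PP B' + QQ A * QQ B') + ?x * (PP A + QQ A) * (PP B' + QQ B')"
      unfolding B'_def[symmetric] tr_PQ e1
      by (simp add: Beq PP_ins QQ_ins fA fB' jA PP_un QQ_un dd)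
    also have "\<dots> = (1+1) * (?y * PP A * PP B' + (?y+?x) * QQ A * QQ B' + PP A * QQ B' * (?y+?x)
       + QQ A * PP B' * (?y+?x) + ?x * PP A * PP B' + ?x * QQ A * QQ B')"
      by (simp add: algebra_simps)
    finally show ?thesis using two_zero[OF c2] by blast
  qed
  have pb: "(tr A * tr B + Xv i * tr A * tr (B - {i}) + Nv i * tr (A - {i}) * tr (B - {i})
          + Xv i * NPow (B - {i}) * tr ((A - B) \<union> {i}) :: (nat \<Rightarrow>\<^sub>0 nat) \<Rightarrow>\<^sub>0 'a) = 0"
    if s: "B \<subseteq> A" and i: "i \<in> A \<inter> B" for i
  proof -
    define B' where "B' = B - {i}"
    define J where "J = A - B"
    have fB': "finite B'" using fB B'_def by simp
    have fJ: "finite J" using fA J_def by simp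
    have Beq: "B = insert i B'" "i \<notin> B'" using i B'_def by auto
    have iJ: "i \<notin> J" using i J_def by auto
    have dd: "J \<inter> B' = {}" using J_def B'_def by auto
    have Aeq: "A = insert i (J \<union> B')" using s i J_def B'_def by auto
    have A'eq: "A - {i} = J \<union> B'" using s i J_def B'_def by auto
    have e1: "J \<union> {i} = insert i J" by auto
    have iJB: "i \<notin> J \<union> B'" using iJ Beq by auto
    let ?y = "Yv i :: (nat \<Rightarrow>\<^sub>0 nat) \<Rightarrow>\<^sub>0 'a" and ?x = "Xv i :: (nat \<Rightarrow>\<^sub>0 nat) \<Rightarrow>\<^sub>0 'a"
    let ?p = "PP B' :: (nat \<Rightarrow>\<^sub>0 nat) \<Rightarrow>\<^sub>0 'a" and ?q = "QQ B' :: (nat \<Rightarrow>\<^sub>0 nat) \<Rightarrow>\<^sub>0 'a"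
    let ?a = "PP J :: (nat \<Rightarrow>\<^sub>0 nat) \<Rightarrow>\<^sub>0 'a" and ?b = "QQ J :: (nat \<Rightarrow>\<^sub>0 nat) \<Rightarrow>\<^sub>0 'a"
    have "(tr A * tr B + Xv i * tr A * tr (B - {i}) + Nv i * tr (A - {i}) * tr (B - {i})
          + Xv i * NPow (B - {i}) * tr ((A - B) \<union> {i}) :: (nat \<Rightarrow>\<^sub>0 nat) \<Rightarrow>\<^sub>0 'a) =
       (?y * (?a * ?p) + (?y + ?x) * (?b * ?q)) * (?y * ?p + (?y + ?x) * ?q)
       + ?x * (?y * (?a * ?p) + (?y + ?x) * (?b * ?q)) * (?p + ?q)
       + ?y * (?y + ?x) * (?a * ?p + ?b * ?q) * (?p + ?q)
       + ?x * (?p * ?q) * (?y * ?a + (?y + ?x) * ?b)"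
      unfolding B'_def[symmetric] J_def[symmetric] A'eq tr_PQ e1 NPow_eq Nv_eq
      apply (subst (1 2 3 4) Aeq)
      by (simp add: Beq PP_ins QQ_ins fJ fB' iJ iJB PP_un QQ_un dd)
    also have "\<dots> = (1+1) * (?a*?p*?p*?y*(?y+?x) + ?b*?q*?q*(?y+?x)*(?y+?x)
        + ?a*?p*?q*(?y*(?y+?x) + ?x*?y) + ?b*?p*?q*(?y*(?y+?x) + ?x*(?y+?x)))"
      by (simp add: algebra_simps power2_eq_square)
    finally show ?thesis using two_zero[OF c2] by blast
  qed
  have pc: "(tr A * tr B + tr ((A \<inter> B) \<union> (A - B) \<union> (B - A)) * tr (A \<inter> B)
          + NPow (A \<inter> B) * tr (A - B) * tr (B - A) :: (nat \<Rightarrow>\<^sub>0 nat) \<Rightarrow>\<^sub>0 'a) = 0"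
  proof -
    define I where "I = A \<inter> B"
    define J where "J = A - B"
    define K where "K = B - A"
    have f: "finite I" "finite J" "finite K" using fA fB I_def J_def K_def by auto
    have d: "I \<inter> J = {}" "I \<inter> K = {}" "J \<inter> K = {}" "(I \<union> J) \<inter> K = {}"
      using I_def J_def K_def by auto
    have Aeq: "A = I \<union> J" and Beq: "B = I \<union> K" using I_def J_def K_def by auto
    let ?pi = "PP I :: (nat \<Rightarrow>\<^sub>0 nat) \<Rightarrow>\<^sub>0 'a" and ?qi = "QQ I :: (nat \<Rightarrow>\<^sub>0 nat) \<Rightarrow>\<^sub>0 'a"
    let ?pj = "PP J :: (nat \<Rightarrow>\<^sub>0 nat) \<Rightarrow>\<^sub>0 'a" and ?qj = "QQ J :: (nat \<Rightarrow>\<^sub>0 nat) \<Rightarrow>\<^sub>0 'a"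
    let ?pk = "PP K :: (nat \<Rightarrow>\<^sub>0 nat) \<Rightarrow>\<^sub>0 'a" and ?qk = "QQ K :: (nat \<Rightarrow>\<^sub>0 nat) \<Rightarrow>\<^sub>0 'a"
    have "(tr A * tr B + tr ((A \<inter> B) \<union> (A - B) \<union> (B - A)) * tr (A \<inter> B)
          + NPow (A \<inter> B) * tr (A - B) * tr (B - A) :: (nat \<Rightarrow>\<^sub>0 nat) \<Rightarrow>\<^sub>0 'a) =
       (?pi * ?pj + ?qi * ?qj) * (?pi * ?pk + ?qi * ?qk)
       + (?pi * ?pj * ?pk + ?qi * ?qj * ?qk) * (?pi + ?qi)
       + ?pi * ?qi * (?pj + ?qj) * (?pk + ?qk)"
      unfolding I_def[symmetric] J_def[symmetric] K_def[symmetric] tr_PQ NPow_eq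
      apply (subst (1 2) Aeq)
      apply (subst (1 2) Beq)
      by (simp add: f d PP_un QQ_un finite_UnI)
    also have "\<dots> = (1+1) * (?pi*?pi*?pj*?pk + ?qi*?qi*?qj*?qk + ?pi*?qi*?pj*?qk
        + ?pi*?qi*?qj*?pk + ?pi*?qi*?pj*?pk + ?pi*?qi*?qj*?qk)"
      by (simp add: algebra_simps)
    finally show ?thesis using two_zero[OF c2] by blast
  qed
  show ?thesis using pa pb pc by blast
qed

end
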